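(* Let $f$ be a positive definite function and $W=\{w_1,\dots,w_N\}\subset V$. Then the GBF interpolation operator satisfies $$\sup_{x\in\mathcal{L}(G),\ \|x\|\le1}\|\mathrm{I}_Wx\|\le\|\mathbf{K}_{f,W}^{-1}\|\,\|\mathbf{K}_f\|\le\frac{\max_{1\le k\le n}\hat{f}_k}{\min_{1\le k\le n}\hat{f}_k}.$$
   Context: Let $G$ be a graph with vertex set $V=\{v_1,\dots,v_n\}$, symmetric non-negative weighted adjacency matrix $\mathbf{A}$, degree matrix $\mathbf{D}=\mathrm{diag}(\sum_k\mathbf{A}_{ik})$ (positive), and normalized Laplacian $\mathbf{L}=\mathbf{I}_n-\mathbf{D}^{-1/2}\mathbf{A}\mathbf{D}^{-1/2}$. Signals are vectors in $\mathcal{L}(G)\cong\mathbb{R}^n$ with euclidean norm $\|\cdot\|$ and standard basis $e_1,\dots,e_n$; matrix norms are spectral norms. Fix an orthonormal eigendecomposition $\mathbf{L}=\mathbf{U}\,\mathrm{diag}(\lambda_1,\dots,\lambda_n)\mathbf{U}^\intercal$ with columns $u_1,\dots,u_n$. Fourier transform $\hat{x}=\mathbf{U}^\intercal x$; convolution operator $\mathbf{C}_x=\mathbf{U}\,\mathrm{diag}(\hat{x})\mathbf{U}^\intercal$. For $f\in\mathcal{L}(G)$ let $(\mathbf{K}_f)_{ij}=(\mathbf{C}_{e_j}f)(v_i)$; $f$ is a positive definite function if $\mathbf{K}_f$ is symmetric strictly positive definite. For distinct nodes $w_k=v_{j_k}$, $k=1,\dots,N$, let $\mathbf{K}_{f,W}\in\mathbb{R}^{N\times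 N}$, $(\mathbf{K}_{f,W})_{kl}=(\mathbf{C}_{e_{j_l}}f)(w_k)$; the GBF interpolant is $\mathrm{I}_Wx=\sum_{k=1}^Nc_k\mathbf{C}_{e_{j_k}}f$ where $\mathbf{K}_{f,W}c=(x(w_1),\dots,x(w_N))^\intercal$. *)

theory Defs
  imports "HOL-Analysis.Analysis"
begin

text \<open>Vertices v_1..v_n are the elements of a finite type 'n; signals are real^'n.\<close>

definition diag_mat :: "real^'n \<Rightarrow> real^'n^'n" where
  "diag_mat d = (\<chi> i j. if i = j then d $ i else 0)"

definition degree_mat :: "real^'n^'n \<Rightarrow> real^'n^'n" where
  "degree_mat A = diag_mat (\<chi> i. \<Sum>k\<in>UNIV. A $ i $ k)"

definition norm_laplacian :: "real^'n^'n \<Rightarrow> real^'n^'n" where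
  "norm_laplacian A =
     mat 1 - diag_mat (\<chi> i. 1 / sqrt (\<Sum>k\<in>UNIV. A $ i $ k)) ** A
             ** diag_mat (\<chi> i. 1 / sqrt (\<Sum>k\<in>UNIV. A $ i $ k))"

definition gft :: "real^'n^'n \<Rightarrow> real^'n \<Rightarrow> real^'n" where
  "gft U x = transpose U *v x"

definition conv_op :: "real^'n^'n \<Rightarrow> real^'n \<Rightarrow> real^'n^'n" where
  "conv_op U x = U ** diag_mat (gft U x) ** transpose U"

definition kernel_mat :: "real^'n^'n \<Rightarrow> real^'n \<Rightarrow> real^'n^'n" where
  "kernel_mat U f = (\<chi> i j. (conv_op U (axis j 1) *v f) $ i)"

definition pos_def_function :: "real^'n^'n \<Rightarrow> real^'n \<Rightarrow> bool" where
  "pos_def_function U f \<longleftrightarrow>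
     transpose (kernel_mat U f) = kernel_mat U f \<and>
     (\<forall>x. x \<noteq> 0 \<longrightarrow> x \<bullet> (kernel_mat U f *v x) > 0)"

text \<open>Nodes w_k = v_{j k}, indexed by a finite type 'm (k = 1..N), j injective.\<close>
definition kernel_mat_W :: "real^'n^'n \<Rightarrow> real^'n \<Rightarrow> ('m::finite \<Rightarrow> 'n) \<Rightarrow> real^'m^'m" where
  "kernel_mat_W U f j = (\<chi> k l. (conv_op U (axis (j l) 1) *v f) $ (j k))"

definition gbf_interp ::
  "real^'n^'n \<Rightarrow> real^'n \<Rightarrow> ('m::finite \<Rightarrow> 'n) \<Rightarrow> real^'n \<Rightarrow> real^'n" where
  "gbf_interp U f j x =
     (let c = matrix_inv (kernel_mat_W U f j) *v (\<chi> k. x $ j k)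
      in \<Sum>k\<in>UNIV. c $ k *\<^sub>R (conv_op U (axis (j k) 1) *v f))"

definition spec_norm :: "real^'n^'m \<Rightarrow> real" where
  "spec_norm M = onorm (\<lambda>x. M *v x)"

end

theory Submission imports Defs begin

lemma diag_mv: "diag_mat a *v b = (\<chi> i. a$i * b$i)"
  by (simp add: diag_mat_def matrix_vector_mult_def vec_eq_iff if_distrib[where f="\<lambda>t. t * _"] cong: if_cong)

lemma diag_mv_comm: "diag_mat a *v b = diag_mat b *v a"
  by (simp add: diag_mv mult.commute)

lemma K_eq: "kernel_mat U f = U ** diag_mat (gft U f) ** transpose U"
proof -
  have "(conv_op U (axis j 1) *v f) $ i = ((U ** diag_mat (gft U f) ** transpose U) *v axis j 1) $ i" for i j
  proof -
    have "conv_op U (axis j 1) *v f = U *v (diag_mat (gft U (axis j 1)) *v (gft U f))"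
      unfolding conv_op_def gft_def by (simp only: matrix_vector_mul_assoc matrix_mul_assoc)
    also have "\<dots> = U *v (diag_mat (gft U f) *v (gft U (axis j 1)))"
      by (simp only: diag_mv_comm)
    also have "\<dots> = (U ** diag_mat (gft U f) ** transpose U) *v axis j 1"
      unfolding gft_def by (simp only: matrix_vector_mul_assoc matrix_mul_assoc)
    finally show ?thesis by simp
  qed
  then show ?thesis
    unfolding kernel_mat_def by (simp add: vec_eq_iff matrix_vector_mult_basis column_def)
qed

lemma quad: "x \<bullet> ((U ** diag_mat a ** transpose U) *v x) = (\<Sum>k\<in>UNIV. a$k * ((gft U x)$k)^2)"
proof -
  have "x \<bullet> ((U ** diag_mat a ** transpose U) *v x) = x \<bullet> (U *v (diag_mat a *v gft U x))"
    unfolding gft_def by (simp only: matrix_vector_mul_assoc matrix_mul_assoc)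
  also have "\<dots> = (x v* U) \<bullet> (diag_mat a *v gft U x)"
    by (simp only: dot_lmul_matrix)
  also have "\<dots> = gft U x \<bullet> (diag_mat a *v gft U x)"
    unfolding gft_def by simp
  also have "\<dots> = (\<Sum>k\<in>UNIV. a$k * ((gft U x)$k)^2)"
    by (simp add: diag_mv inner_vec_def power2_eq_square mult_ac)
  finally show ?thesis .
qed

lemma gft_norm: assumes "orthogonal_matrix U" shows "norm (gft U x) = norm x"
proof -
  have "gft U x \<bullet> gft U x = x \<bullet> x"
  proof -
    have "gft U x \<bullet> gft U x = x \<bullet> (U *v (transpose U *v x))"
      unfolding gft_def by (metis dot_lmul_matrix transpose_matrix_vector)
    also have "\<dots> = x \<bullet> x" using assms unfolding orthogonal_matrix_def
      by (simp only: matrix_vector_mul_assoc matrix_vector_mul_lid)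
    finally show ?thesis .
  qed
  then show ?thesis by (simp add: norm_eq_sqrt_inner)
qed


lemma sq_norm_sum: "(norm (x::real^'n))^2 = (\<Sum>k\<in>UNIV. (x$k)^2)"
  by (simp only: power2_norm_eq_inner) (simp add: inner_vec_def power2_eq_square)

lemma fhat_pos:
  assumes orth: "orthogonal_matrix U" and pd: "pos_def_function U f"
  shows "gft U f $ k > 0"
proof -
  let ?x = "U *v axis k 1"
  have g: "gft U ?x = axis k 1"
    using orth unfolding gft_def orthogonal_matrix_def
    by (simp only: matrix_vector_mul_assoc matrix_vector_mul_lid)
  have "?x \<noteq> 0"
  proof
    assume "?x = 0"
    then have "gft U ?x = 0" by (simp add: gft_def)
    with g show False by (simp add: axis_eq_0_iff)
  qed
  with pd have "?x \<bullet> (kernel_mat U f *v ?x) > 0" unfolding pos_def_function_def by blast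
  also have "?x \<bullet> (kernel_mat U f *v ?x) = gft U f $ k"
    unfolding K_eq quad g by (simp add: axis_def power2_eq_square if_distrib[where f="\<lambda>t. _ * t"] cong: if_cong)
  finally show ?thesis .
qed

lemma quad_lower:
  assumes orth: "orthogonal_matrix U" and mu: "\<And>k. mu \<le> gft U f $ k"
  shows "mu * (norm x)^2 \<le> x \<bullet> (kernel_mat U f *v x)"
proof -
  have "mu * (norm x)^2 = (\<Sum>k\<in>UNIV. mu * ((gft U x)$k)^2)"
  proof -
    have "(norm x)^2 = (\<Sum>k\<in>UNIV. ((gft U x)$k)^2)"
      using gft_norm[OF orth, of x] sq_norm_sum[of "gft U x"] by simp
    then show ?thesis by (simp add: sum_distrib_left)
  qed
  also have "\<dots> \<le> (\<Sum>k\<in>UNIV. gft U f $ k * ((gft U x)$k)^2)"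
    by (rule sum_mono) (simp add: mu mult_right_mono)
  also have "\<dots> = x \<bullet> (kernel_mat U f *v x)" unfolding K_eq quad ..
  finally show ?thesis .
qed

lemma K_upper:
  assumes orth: "orthogonal_matrix U" and M: "\<And>k. \<bar>gft U f $ k\<bar> \<le> M"
  shows "norm (kernel_mat U f *v x) \<le> M * norm x"
proof -
  have orthT: "orthogonal_matrix (transpose U)" using orth by simp
  let ?z = "gft U x"
  have "kernel_mat U f *v x = U *v (diag_mat (gft U f) *v ?z)"
    unfolding K_eq gft_def by (simp only: matrix_vector_mul_assoc matrix_mul_assoc)
  also have "norm \<dots> = norm (diag_mat (gft U f) *v ?z)"
    using gft_norm[OF orthT, of "diag_mat (gft U f) *v ?z"] by (simp add: gft_def)
  also have "\<dots> \<le> M * norm x"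
  proof (rule power2_le_imp_le)
    have M0: "0 \<le> M" using M[of undefined] by linarith
    show "0 \<le> M * norm x" using M0 by simp
    have "(norm (diag_mat (gft U f) *v ?z))^2 = (\<Sum>k\<in>UNIV. (gft U f $ k)^2 * (?z$k)^2)"
      by (simp add: sq_norm_sum diag_mv power_mult_distrib)
    also have "\<dots> \<le> (\<Sum>k\<in>UNIV. M^2 * (?z$k)^2)"
      apply (rule sum_mono, rule mult_right_mono)
      using M by (auto simp: abs_le_square_iff[symmetric] abs_of_nonneg M0)
    also have "\<dots> = (M * norm x)^2"
    proof -
      have "(norm x)^2 = (\<Sum>k\<in>UNIV. ((gft U x)$k)^2)"
        using gft_norm[OF orth, of x] sq_norm_sum[of "gft U x"] by simp
      then show ?thesis by (simp add: power_mult_distrib sum_distrib_left)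
    qed
    finally show "(norm (diag_mat (gft U f) *v ?z))^2 \<le> (M * norm x)^2" .
  qed
  finally show ?thesis .
qed


definition emb :: "('m::finite \<Rightarrow> 'n) \<Rightarrow> real^'m \<Rightarrow> real^'n" where
  "emb j c = (\<Sum>k\<in>UNIV. c$k *\<^sub>R axis (j k) 1)"

lemma K_emb: "M *v emb j c = (\<Sum>k\<in>UNIV. c$k *\<^sub>R (M *v axis (j k) 1))"
  unfolding emb_def by (simp add: linear_sum[OF matrix_vector_mul_linear] linear_scale[OF matrix_vector_mul_linear] matrix_vector_mult_scaleR)

lemma emb_norm: assumes "inj j" shows "norm (emb j c) = norm c"
proof -
  have "emb j c \<bullet> emb j c = (\<Sum>k\<in>UNIV. c$k * (\<Sum>l\<in>UNIV. c$l * (axis (j l) 1 \<bullet> axis (j k) (1::real))))"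
    unfolding emb_def by (simp add: inner_sum_left inner_sum_right mult_ac)
  also have "\<dots> = (\<Sum>k\<in>UNIV. c$k * c$k)"
    using assms by (simp add: inner_axis_axis inj_eq if_distrib[where f="\<lambda>t. _ * t"] cong: if_cong)
  also have "\<dots> = c \<bullet> c" by (simp add: inner_vec_def)
  finally show ?thesis by (simp add: norm_eq_sqrt_inner)
qed

lemma conv_col: "conv_op U (axis b 1) *v f = kernel_mat U f *v axis b 1"
  by (simp add: matrix_vector_mult_basis column_def kernel_mat_def)

lemma KW_entry: "kernel_mat_W U f j $ k $ l = kernel_mat U f $ j k $ j l"
  by (simp add: kernel_mat_W_def kernel_mat_def)

lemma KW_quad: "c \<bullet> (kernel_mat_W U f j *v c) = emb j c \<bullet> (kernel_mat U f *v emb j c)"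
proof -
  have "emb j c \<bullet> (kernel_mat U f *v emb j c) =
     (\<Sum>k\<in>UNIV. c$k * (\<Sum>l\<in>UNIV. c$l * (axis (j l) 1 \<bullet> (kernel_mat U f *v axis (j k) 1))))"
    unfolding K_emb by (simp add: emb_def inner_sum_left inner_sum_right mult_ac)
  also have "\<dots> = (\<Sum>k\<in>UNIV. c$k * (\<Sum>l\<in>UNIV. c$l * kernel_mat U f $ j l $ j k))"
    by (simp add: matrix_vector_mult_basis column_def inner_commute[of "axis _ _"] inner_axis)
  also have "\<dots> = c \<bullet> (kernel_mat_W U f j *v c)"
    unfolding inner_vec_def matrix_vector_mult_def KW_entry
    apply (simp add: sum_distrib_left)
    apply (subst sum.swap)
    apply (simp add: mult_ac)
    done
  finally show ?thesis by simp
qed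

lemma gbf_eq: "gbf_interp U f j x = kernel_mat U f *v emb j (matrix_inv (kernel_mat_W U f j) *v (\<chi> k. x $ j k))"
  unfolding gbf_interp_def K_emb Let_def conv_col ..

lemma restr_norm: assumes "inj j" shows "norm (\<chi> k. x $ j k) \<le> norm (x::real^'n)"
proof (rule power2_le_imp_le)
  have "(norm (\<chi> k. x $ j k))^2 = (\<Sum>k\<in>UNIV. (x $ j k)^2)" by (simp add: sq_norm_sum)
  also have "\<dots> = (\<Sum>i\<in>range j. (x$i)^2)"
    using sum.reindex[OF assms, of "\<lambda>i. (x$i)^2"] by simp
  also have "\<dots> \<le> (\<Sum>i\<in>UNIV. (x$i)^2)" by (rule sum_mono2) auto
  finally show "(norm (\<chi> k. x $ j k))^2 \<le> (norm x)^2" by (simp add: sq_norm_sum)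
qed simp


lemma inv_bound:
  fixes KW :: "real^'m^'m"
  assumes mu: "mu > 0" and low: "\<And>c. mu * (norm c)^2 \<le> c \<bullet> (KW *v c)"
  shows "spec_norm (matrix_inv KW) \<le> 1 / mu"
proof -
  have lowb: "mu * norm c \<le> norm (KW *v c)" for c
  proof (cases "c = 0")
    case False
    have "mu * norm c * norm c \<le> norm c * norm (KW *v c)"
      using low[of c] norm_cauchy_schwarz[of c "KW *v c"] by (simp add: power2_eq_square)
    then show ?thesis using False by (simp add: mult.commute)
  qed simp
  have "inj ((*v) KW)"
  proof (rule injI)
    fix a b assume "KW *v a = KW *v b"
    then have "KW *v (a - b) = 0" by (simp add: matrix_vector_mult_diff_distrib)
    then have "mu * norm (a - b) \<le> 0" using lowb[of "a - b"] by simp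
    then show "a = b" using mu by (simp add: mult_le_0_iff)
  qed
  then obtain B where "B ** KW = mat 1" using matrix_left_invertible_injective by blast
  then have "KW ** B = mat 1 \<and> B ** KW = mat 1" using matrix_left_right_inverse by blast
  then have "KW ** matrix_inv KW = mat 1 \<and> matrix_inv KW ** KW = mat 1"
    unfolding matrix_inv_def by (rule someI)
  then have inv: "KW *v (matrix_inv KW *v y) = y" for y
    by (simp add: matrix_vector_mul_assoc)
  show ?thesis unfolding spec_norm_def
  proof (rule onorm_le)
    fix y
    have "mu * norm (matrix_inv KW *v y) \<le> norm y" using lowb[of "matrix_inv KW *v y"] inv[of y] by simp
    then show "norm (matrix_inv KW *v y) \<le> 1 / mu * norm y" using mu by (simp add: field_simps)
  qed
qed

theorem theorem8:
  fixes A U :: "real^'n^'n" and lam f :: "real^'n" and j :: "'m::finite \<Rightarrow> 'n"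
  assumes sym: "transpose A = A"
    and nonneg: "\<forall>i k. A $ i $ k \<ge> 0"
    and deg_pos: "\<forall>i. (\<Sum>k\<in>UNIV. A $ i $ k) > 0"
    and orth: "orthogonal_matrix U"
    and eig: "norm_laplacian A = U ** diag_mat lam ** transpose U"
    and pd: "pos_def_function U f"
    and inj: "inj j"
  shows "Sup {norm (gbf_interp U f j x) | x. norm x \<le> 1}
           \<le> spec_norm (matrix_inv (kernel_mat_W U f j)) * spec_norm (kernel_mat U f)
       \<and> spec_norm (matrix_inv (kernel_mat_W U f j)) * spec_norm (kernel_mat U f)
           \<le> Max (range (\<lambda>k. gft U f $ k)) / Min (range (\<lambda>k. gft U f $ k))"
proof -
  define K where "K = kernel_mat U f"
  define KW where "KW = kernel_mat_W U f j"
  define mu where "mu = Min (range (\<lambda>k. gft U f $ k))"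
  define M where "M = Max (range (\<lambda>k. gft U f $ k))"
  have pos: "\<And>k. gft U f $ k > 0" using fhat_pos[OF orth pd] .
  have mu_le: "\<And>k. mu \<le> gft U f $ k" unfolding mu_def by (rule Min_le) auto
  have M_ge: "\<And>k. gft U f $ k \<le> M" unfolding M_def by (rule Max_ge) auto
  have mu_pos: "mu > 0"
  proof -
    have "mu \<in> range (\<lambda>k. gft U f $ k)" unfolding mu_def by (rule Min_in) auto
    then show ?thesis using pos by auto
  qed
  have absM: "\<bar>gft U f $ k\<bar> \<le> M" for k using pos[of k] M_ge[of k] by simp
  have sK: "spec_norm K \<le> M" unfolding spec_norm_def K_def
    by (rule onorm_le) (rule K_upper[OF orth absM])
  have lowW: "mu * (norm c)^2 \<le> c \<bullet> (KW *v c)" for c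
    unfolding KW_def KW_quad using quad_lower[OF orth mu_le, of "emb j c"] emb_norm[OF inj, of c] by simp
  have sKi: "spec_norm (matrix_inv KW) \<le> 1 / mu" by (rule inv_bound[OF mu_pos lowW])
  have sK0: "0 \<le> spec_norm K" unfolding spec_norm_def by (rule onorm_pos_le) simp
  have sKi0: "0 \<le> spec_norm (matrix_inv KW)" unfolding spec_norm_def by (rule onorm_pos_le) simp
  have part2: "spec_norm (matrix_inv KW) * spec_norm K \<le> M / mu"
  proof -
    have "spec_norm (matrix_inv KW) * spec_norm K \<le> (1 / mu) * M"
      by (rule mult_mono[OF sKi sK]) (use mu_pos sKi0 sK0 in auto)
    then show ?thesis by simp
  qed
  have part1: "Sup {norm (gbf_interp U f j x) | x. norm x \<le> 1} \<le> spec_norm (matrix_inv KW) * spec_norm K"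
  proof (rule cSup_least)
    show "{norm (gbf_interp U f j x) | x. norm x \<le> 1} \<noteq> {}" by (auto intro: exI[of _ 0])
  next
    fix t assume "t \<in> {norm (gbf_interp U f j x) | x. norm x \<le> 1}"
    then obtain x where x: "norm x \<le> 1" and t: "t = norm (gbf_interp U f j x)" by blast
    define r where "r = (\<chi> k. x $ j k)"
    define c where "c = matrix_inv KW *v r"
    have "t = norm (K *v emb j c)" unfolding t gbf_eq c_def r_def K_def KW_def ..
    also have "\<dots> \<le> spec_norm K * norm (emb j c)"
      unfolding spec_norm_def by (rule onorm) simp
    also have "\<dots> = spec_norm K * norm c" using emb_norm[OF inj] by simp
    also have "\<dots> \<le> spec_norm K * (spec_norm (matrix_inv KW) * norm r)"
      unfolding c_def spec_norm_def
      by (rule mult_left_mono[OF onorm]) (use sK0 in \<open>auto simp: spec_norm_def\<close>)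
    also have "\<dots> \<le> spec_norm K * (spec_norm (matrix_inv KW) * 1)"
    proof -
      have "norm r \<le> 1" using restr_norm[OF inj, of x] x unfolding r_def by linarith
      then show ?thesis using sK0 sKi0 by (intro mult_left_mono) auto
    qed
    finally show "t \<le> spec_norm (matrix_inv KW) * spec_norm K" by (simp add: mult.commute)
  qed
  show ?thesis using part1 part2 unfolding K_def KW_def M_def mu_def by blast
qed

end
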